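(* Let $G$ be a flat affine group scheme over $R$ and $N\to G$ the automatic blowup of the identity. Then for every $n\ge0$ the group scheme $N\otimes_RR_n$ over $R_n$ is trivial, i.e. isomorphic to $\mathrm{Spec}\,R_n$. Conversely, if $\rho:\mathcal G\to G$ is a morphism of flat affine group schemes over $R$ inducing an isomorphism on generic fibres and such that $\mathcal G\otimes_RR_n$ is trivial for all $n\ge0$, then $R[\mathcal G]=R[N]$ as subrings of $K[G]$, i.e. $\rho$ is the automatic blowup of the identity.
   Context: $R$ is a discrete valuation ring with uniformizer $\pi$, fraction field $K$, residue field $k$; $R_n=R/(\pi^{n+1})$; $R[G]\subset K[G]$ for flat $G$. The Neron blowup of a flat affine group scheme $H$ at a closed subgroup of $H\otimes k$ with ideal $J\subset R[H]$ (inverse image of its ideal) is $\mathrm{Spec}$ of the subring of $K[H]$ generated by $R[H]$ and $\pi^{-1}J$. The automatic blowup of the identity $N\to G$ is the limit of $\cdots\to G_{n+1}\to G_n\to\cdots\to G_0=G$, where $G_{n+1}\to G_n$ is the Neron blowup of $G_n$ at $\{e\}\subset G_n\otimes k$. *)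

theory Defs
  imports Complex_Main
begin

text \<open>
The field 'k plays the role of the fraction field K; R is a subset of 'k
which is a discrete valuation ring with uniformizer unif and fraction field K.
The coordinate ring K[G] is a commutative ring 'a, made into a K-algebra by the
ring homomorphism iota; the counit of K[G] is eps. Coordinate rings R[H] of flat
affine group schemes H with generic fibre G_K are R-subalgebras of K[G] spanning
K[G] over K (flatness over a DVR = torsion-freeness, automatic inside K[G]).
\<close>

definition is_ring_hom :: "('b::comm_ring_1 \<Rightarrow> 'c::comm_ring_1) \<Rightarrow> bool" where
  "is_ring_hom f \<longleftrightarrow> f 1 = 1 \<and> (\<forall>x y. f (x + y) = f x + f y \<and> f (x * y) = f x * f y)"

definition is_subring :: "'b::comm_ring_1 set \<Rightarrow> bool" where
  "is_subring S \<longleftrightarrow> 1 \<in> S \<and> (\<forall>x\<in>S. \<forall>y\<in>S. x + y \<in> S \<and> x * y \<in> S \<and> - x \<in> S)"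

definition is_dvr_unif :: "'k::field set \<Rightarrow> 'k \<Rightarrow> bool" where
  "is_dvr_unif R unif \<longleftrightarrow> is_subring R \<and> unif \<in> R \<and> unif \<noteq> 0 \<and> inverse unif \<notin> R \<and>
     (\<forall>x. x \<noteq> 0 \<longrightarrow> (\<exists>v m. v \<in> R \<and> inverse v \<in> R \<and> x = v * unif powi m))"

definition ring_gen :: "'b::comm_ring_1 set \<Rightarrow> 'b set" where
  "ring_gen S = \<Inter> {B. is_subring B \<and> S \<subseteq> B}"

text \<open>A is (the image of) the coordinate ring R[H] of a flat affine group scheme H
  over R with H_K = G_K, inside K[G]: an R-subalgebra with K.A = K[G], on which the
  counit takes values in R.\<close>
definition is_R_form :: "'k::field set \<Rightarrow> 'k \<Rightarrow> ('k \<Rightarrow> 'a::comm_ring_1) \<Rightarrow> ('a \<Rightarrow> 'k) \<Rightarrow> 'a set \<Rightarrow> bool" where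
  "is_R_form R unif iota eps A \<longleftrightarrow> is_subring A \<and> iota ` R \<subseteq> A \<and> eps ` A \<subseteq> R \<and>
     (\<forall>y. \<exists>a\<in>A. \<exists>n::nat. y = iota (inverse unif ^ n) * a)"

text \<open>Neron blowup of H (coordinate ring A) at the identity of H \<otimes> k:
  J = inverse image in R[H] of the ideal of {e} in k[H], i.e. {x \<in> A. eps x \<in> unif R};
  the blowup is the subring of K[G] generated by A and unif^-1 J.\<close>
definition neron_blowup_e :: "'k::field set \<Rightarrow> 'k \<Rightarrow> ('k \<Rightarrow> 'a::comm_ring_1) \<Rightarrow> ('a \<Rightarrow> 'k) \<Rightarrow> 'a set \<Rightarrow> 'a set" where
  "neron_blowup_e R unif iota eps A =
     ring_gen (A \<union> (\<lambda>x. iota (inverse unif) * x) ` {x \<in> A. eps x \<in> (\<lambda>r. unif * r) ` R})"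

primrec aut_tower :: "'k::field set \<Rightarrow> 'k \<Rightarrow> ('k \<Rightarrow> 'a::comm_ring_1) \<Rightarrow> ('a \<Rightarrow> 'k) \<Rightarrow> 'a set \<Rightarrow> nat \<Rightarrow> 'a set" where
  "aut_tower R unif iota eps A 0 = A"
| "aut_tower R unif iota eps A (Suc n) = neron_blowup_e R unif iota eps (aut_tower R unif iota eps A n)"

text \<open>Automatic blowup of the identity: R[N] = colimit (union) of the R[G_n].\<close>
definition aut_blowup :: "'k::field set \<Rightarrow> 'k \<Rightarrow> ('k \<Rightarrow> 'a::comm_ring_1) \<Rightarrow> ('a \<Rightarrow> 'k) \<Rightarrow> 'a set \<Rightarrow> 'a set" where
  "aut_blowup R unif iota eps A = (\<Union>n. aut_tower R unif iota eps A n)"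

text \<open>H \<otimes>_R R_m is trivial (isomorphic to Spec R_m), where R_m = R/(unif^(m+1)):
  the structure map R_m \<rightarrow> R[H]/unif^(m+1) R[H] is bijective.\<close>
definition trivial_mod :: "'k::field set \<Rightarrow> 'k \<Rightarrow> ('k \<Rightarrow> 'a::comm_ring_1) \<Rightarrow> 'a set \<Rightarrow> nat \<Rightarrow> bool" where
  "trivial_mod R unif iota B m \<longleftrightarrow>
     (\<forall>x\<in>B. \<exists>r\<in>R. \<exists>b\<in>B. x - iota r = iota (unif ^ (m + 1)) * b) \<and>
     (\<forall>r\<in>R. (\<exists>b\<in>B. iota r = iota (unif ^ (m + 1)) * b) \<longrightarrow> (\<exists>s\<in>R. r = unif ^ (m + 1) * s))"

end

theory Submission
  imports Defs
begin

lemma hom_add: "is_ring_hom f \<Longrightarrow> f (x + y) = f x + f y" by (simp add: is_ring_hom_def)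
lemma hom_mult: "is_ring_hom f \<Longrightarrow> f (x * y) = f x * f y" by (simp add: is_ring_hom_def)
lemma hom_one: "is_ring_hom f \<Longrightarrow> f 1 = 1" by (simp add: is_ring_hom_def)
lemma hom_zero: "is_ring_hom f \<Longrightarrow> f 0 = 0"
  using hom_add[of f 0 0] by simp
lemma hom_uminus: "is_ring_hom f \<Longrightarrow> f (- x) = - f x"
  using hom_add[of f x "-x"] hom_zero[of f] by (simp add: add_eq_0_iff2)
lemma hom_diff: "is_ring_hom f \<Longrightarrow> f (x - y) = f x - f y"
  using hom_add[of f x "-y"] hom_uminus[of f y] by simp
lemma hom_power: "is_ring_hom f \<Longrightarrow> f (x ^ n) = f x ^ n"
  by (induction n) (simp_all add: hom_one hom_mult)

lemma sub_one: "is_subring S \<Longrightarrow> 1 \<in> S" by (simp add: is_subring_def)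
lemma sub_add: "is_subring S \<Longrightarrow> x \<in> S \<Longrightarrow> y \<in> S \<Longrightarrow> x + y \<in> S" by (simp add: is_subring_def)
lemma sub_mult: "is_subring S \<Longrightarrow> x \<in> S \<Longrightarrow> y \<in> S \<Longrightarrow> x * y \<in> S" by (simp add: is_subring_def)
lemma sub_uminus: "is_subring S \<Longrightarrow> x \<in> S \<Longrightarrow> - x \<in> S" by (simp add: is_subring_def)
lemma sub_diff: "is_subring S \<Longrightarrow> x \<in> S \<Longrightarrow> y \<in> S \<Longrightarrow> x - y \<in> S"
  using sub_add[of S x "-y"] sub_uminus[of S y] by simp
lemma sub_power: "is_subring S \<Longrightarrow> x \<in> S \<Longrightarrow> x ^ n \<in> S"
  by (induction n) (simp_all add: sub_one sub_mult)

lemma ring_gen_subring: "is_subring (ring_gen S)"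
  unfolding ring_gen_def is_subring_def by auto
lemma ring_gen_sup: "S \<subseteq> ring_gen S"
  unfolding ring_gen_def by auto
lemma ring_gen_least: "is_subring B \<Longrightarrow> S \<subseteq> B \<Longrightarrow> ring_gen S \<subseteq> B"
  unfolding ring_gen_def by auto

context
  fixes R :: "'k::field set" and unif :: 'k
    and iota :: "'k \<Rightarrow> 'a::comm_ring_1" and eps :: "'a \<Rightarrow> 'k"
    and A :: "'a set"
  assumes dvr: "is_dvr_unif R unif"
    and iota_hom: "is_ring_hom iota"
    and eps_hom: "is_ring_hom eps"
    and eps_iota: "\<forall>c. eps (iota c) = c"
    and G: "is_R_form R unif iota eps A"
begin

private abbreviation "T \<equiv> aut_tower R unif iota eps A"

private lemma Rsub: "is_subring R" and unifR: "unif \<in> R" and unif0: "unif \<noteq> 0"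
  using dvr by (auto simp: is_dvr_unif_def)

private lemma inv_cancel: "iota (inverse unif) * (iota unif * x) = x"
proof -
  have "iota (inverse unif) * (iota unif * x) = iota (inverse unif * unif) * x"
    by (simp add: hom_mult[OF iota_hom] mult.assoc)
  also have "\<dots> = x" using unif0 by (simp add: hom_one[OF iota_hom])
  finally show ?thesis .
qed

private lemma pw: "iota (unif ^ j) * iota (inverse unif ^ j) = 1"
proof -
  have "unif ^ j * inverse unif ^ j = 1"
    by (metis power_mult_distrib right_inverse power_one unif0)
  then show ?thesis by (metis hom_mult[OF iota_hom] hom_one[OF iota_hom])
qed

private lemma T_sub: "is_subring (T n)"
  by (cases n) (use G in \<open>auto simp: is_R_form_def neron_blowup_e_def ring_gen_subring\<close>)

private lemma T_step: "T n \<subseteq> T (Suc n)"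
  unfolding aut_tower.simps neron_blowup_e_def
  by (rule subset_trans[OF Un_upper1 ring_gen_sup])

private lemma T_mono: "n \<le> m \<Longrightarrow> T n \<subseteq> T m"
  by (induction m rule: dec_induct) (use T_step in auto)

private lemma T_iota: "iota ` R \<subseteq> T n"
  using G T_mono[of 0 n] by (auto simp: is_R_form_def)

private lemma T_gen: "x \<in> T n \<Longrightarrow> r \<in> R \<Longrightarrow> eps x = unif * r \<Longrightarrow> iota (inverse unif) * x \<in> T (Suc n)"
proof -
  assume a: "x \<in> T n" "r \<in> R" "eps x = unif * r"
  have "iota (inverse unif) * x \<in> (\<lambda>x. iota (inverse unif) * x) ` {x \<in> T n. eps x \<in> (\<lambda>r. unif * r) ` R}"
    using a by (intro imageI) auto
  then show ?thesis unfolding aut_tower.simps neron_blowup_e_def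
    by (rule subsetD[OF subset_trans[OF Un_upper2 ring_gen_sup]])
qed

private lemma T_eps: "eps ` T n \<subseteq> R"
proof (induction n)
  case 0 then show ?case using G by (simp add: is_R_form_def)
next
  case (Suc n)
  let ?P = "{x. eps x \<in> R}"
  have sP: "is_subring ?P" using Rsub
    by (auto simp: is_subring_def hom_one[OF eps_hom] hom_add[OF eps_hom]
        hom_mult[OF eps_hom] hom_uminus[OF eps_hom])
  have "T (Suc n) \<subseteq> ?P"
    unfolding aut_tower.simps neron_blowup_e_def
  proof (rule ring_gen_least[OF sP], safe)
    fix x assume "x \<in> T n" then show "eps x \<in> R" using Suc by auto
  next
    fix x r assume "x \<in> T n" "r \<in> R" "eps x = unif * r"
    then show "eps (iota (inverse unif) * x) \<in> R"
      using unif0 by (simp add: hom_mult[OF eps_hom] eps_iota mult.assoc[symmetric])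
  qed
  then show ?case by auto
qed

private lemma T_kill: "x \<in> T n \<Longrightarrow> eps x = 0 \<Longrightarrow>
   iota (inverse unif ^ k) * x \<in> T (n + k) \<and> eps (iota (inverse unif ^ k) * x) = 0"
proof (induction k)
  case 0 then show ?case by (simp add: hom_one[OF iota_hom])
next
  case (Suc k)
  let ?y = "iota (inverse unif ^ k) * x"
  have y: "?y \<in> T (n + k)" "eps ?y = 0" using Suc by auto
  have "eps ?y = unif * 0" using y by simp
  from T_gen[OF y(1) _ this] Rsub have "iota (inverse unif) * ?y \<in> T (Suc (n + k))"
    by (simp add: is_subring_def sub_diff[OF Rsub, of 1 1, simplified])
  moreover have "iota (inverse unif) * ?y = iota (inverse unif ^ Suc k) * x"
    by (simp add: hom_mult[OF iota_hom] mult.assoc)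
  ultimately show ?case using Suc.prems(2) by (simp add: hom_mult[OF eps_hom])
qed

lemma part1: "trivial_mod R unif iota (aut_blowup R unif iota eps A) m"
  unfolding trivial_mod_def aut_blowup_def
proof safe
  fix x n assume x: "x \<in> T n"
  have er: "eps x \<in> R" using T_eps x by auto
  let ?z = "x - iota (eps x)"
  have z: "?z \<in> T n" using sub_diff[OF T_sub x] T_iota er by auto
  have ez: "eps ?z = 0" by (simp add: hom_diff[OF eps_hom] eps_iota)
  from T_kill[OF z ez, of "m+1"]
  have b: "iota (inverse unif ^ (m+1)) * ?z \<in> T (n + (m+1))" by simp
  have "?z = iota (unif ^ (m + 1)) * (iota (inverse unif ^ (m+1)) * ?z)"
  proof -
    note pw[of "m+1"]
    then show ?thesis by (simp add: mult.assoc[symmetric])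
  qed
  then show "\<exists>r\<in>R. \<exists>b\<in>\<Union>n. T n. x - iota r = iota (unif ^ (m + 1)) * b"
    using er b by blast
next
  fix r b n assume r: "r \<in> R" and b: "b \<in> T n" and e: "iota r = iota (unif ^ (m + 1)) * b"
  have "r = unif ^ (m+1) * eps b"
    using arg_cong[OF e, of eps] by (simp add: hom_mult[OF eps_hom] eps_iota)
  then show "\<exists>s\<in>R. r = unif ^ (m + 1) * s" using T_eps b by auto
qed

lemma part2:
  assumes B: "is_R_form R unif iota eps B" and AB: "A \<subseteq> B"
    and triv: "\<forall>m. trivial_mod R unif iota B m"
  shows "B = aut_blowup R unif iota eps A"
proof
  have Bs: "is_subring B" and Be: "eps ` B \<subseteq> R" and Bi: "iota ` R \<subseteq> B"
    using B by (auto simp: is_R_form_def)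
  have "T n \<subseteq> B" for n
  proof (induction n)
    case 0 then show ?case using AB by simp
  next
    case (Suc n)
    show ?case unfolding aut_tower.simps neron_blowup_e_def
    proof (rule ring_gen_least[OF Bs], safe)
      fix x assume "x \<in> T n" then show "x \<in> B" using Suc by auto
    next
      fix x r assume x: "x \<in> T n" and r: "r \<in> R" and e: "eps x = unif * r"
      have xB: "x \<in> B" using x Suc by auto
      from triv[rule_format, of 0] xB obtain s b where s: "s \<in> R" and b: "b \<in> B"
        and eq: "x - iota s = iota unif * b"
        unfolding trivial_mod_def by fastforce
      have "eps x - s = unif * eps b"
        using arg_cong[OF eq, of eps] by (simp add: hom_mult[OF eps_hom] hom_diff[OF eps_hom] eps_iota)
      hence s': "s = unif * (r - eps b)" using e by (simp add: algebra_simps)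
      have t: "r - eps b \<in> R" using sub_diff[OF Rsub r] Be b by auto
      have "iota s = iota unif * iota (r - eps b)" using s' by (simp add: hom_mult[OF iota_hom])
      hence "x = iota unif * (iota (r - eps b) + b)"
        using eq by (simp add: algebra_simps)
      hence "iota (inverse unif) * x = iota (r - eps b) + b" by (simp add: inv_cancel)
      then show "iota (inverse unif) * x \<in> B" using sub_add[OF Bs _ b] Bi t by auto
    qed
  qed
  then show "aut_blowup R unif iota eps A \<subseteq> B" by (auto simp: aut_blowup_def)
next
  have Be: "eps ` B \<subseteq> R" using B by (auto simp: is_R_form_def)
  show "B \<subseteq> aut_blowup R unif iota eps A"
  proof
    fix y assume y: "y \<in> B"
    obtain a n where a: "a \<in> A" and ya: "y = iota (inverse unif ^ n) * a"
      using G unfolding is_R_form_def by blast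
    have ay: "a = iota (unif ^ n) * y"
    proof -
      have "iota (unif ^ n) * y = (iota (unif ^ n) * iota (inverse unif ^ n)) * a"
        unfolding ya by (rule mult.assoc[symmetric])
      then show ?thesis using pw[of n] by simp
    qed
    have ey: "eps y \<in> R" using Be y by auto
    have "k \<le> n \<Longrightarrow> iota (unif ^ (n - k)) * y \<in> T k" for k
    proof (induction k)
      case 0 then show ?case using a ay by simp
    next
      case (Suc k)
      obtain j where j: "n - k = Suc j" using Suc.prems by (intro that[of "n - Suc k"]) simp
      have z: "iota (unif ^ Suc j) * y \<in> T k" using Suc j by simp
      have "eps (iota (unif ^ Suc j) * y) = unif * (unif ^ j * eps y)"
        by (simp add: hom_mult[OF eps_hom] eps_iota)
      moreover have "unif ^ j * eps y \<in> R" using sub_mult[OF Rsub sub_power[OF Rsub unifR] ey] .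
      ultimately have "iota (inverse unif) * (iota (unif ^ Suc j) * y) \<in> T (Suc k)"
        using T_gen[OF z] by blast
      moreover have "iota (inverse unif) * (iota (unif ^ Suc j) * y) = iota (unif ^ j) * y"
        using inv_cancel[of "iota (unif ^ j) * y"] by (simp add: hom_mult[OF iota_hom] mult.assoc)
      moreover have "n - Suc k = j" using j by simp
      ultimately show ?case by simp
    qed
    from this[of n] have "y \<in> T n" by (simp add: hom_one[OF iota_hom])
    then show "y \<in> aut_blowup R unif iota eps A" by (auto simp: aut_blowup_def)
  qed
qed

end

theorem corollary2p23:
  fixes R :: "'k::field set" and unif :: 'k
    and iota :: "'k \<Rightarrow> 'a::comm_ring_1" and eps :: "'a \<Rightarrow> 'k"
    and A :: "'a set"
  assumes dvr: "is_dvr_unif R unif"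
    and iota_hom: "is_ring_hom iota"
    and eps_hom: "is_ring_hom eps"
    and eps_iota: "\<forall>c. eps (iota c) = c"
    and G: "is_R_form R unif iota eps A"
  shows "(\<forall>m. trivial_mod R unif iota (aut_blowup R unif iota eps A) m) \<and>
         (\<forall>B. is_R_form R unif iota eps B \<and> A \<subseteq> B \<and> (\<forall>m. trivial_mod R unif iota B m)
              \<longrightarrow> B = aut_blowup R unif iota eps A)"
  using part1[OF assms] part2[OF assms] by blast

end
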